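(* Let $f\in C^1[0,1]$ with $f(0)=0$, $h:=f'$; let $D\in C^1[0,1]$ with $D>0$ on $(0,1)$, $D(1)=0$; let $g\in C[0,1]$ with $g>0$ on $(0,1]$, $g(0)=0$; assume $\limsup_{\varphi\to0^+}D(\varphi)g(\varphi)/\varphi<+\infty$. Set $q:=Dg$, let $c\ge c^*$ and let $z$ be the solution of $(P_c)$ with $z(1)=0$. Then $$\lim_{\varphi\to1^-}\frac{D(\varphi)}{z(\varphi)}=\begin{cases}\dfrac{h(1)-c-\sqrt{(h(1)-c)^2-4D'(1)g(1)}}{2g(1)} & \text{if } D'(1)<0,\\[2mm] \min\Big\{0,\dfrac{h(1)-c}{g(1)}\Big\} & \text{if } D'(1)=0.\end{cases}$$
   Context: For $c\in\mathbb R$, a solution of problem $(P_c)$ (with $q=Dg$) is a function $z\in C[0,1]\cap C^1(0,1)$ with $\dot z(\varphi)=h(\varphi)-c-q(\varphi)/z(\varphi)$ and $z(\varphi)<0$ for all $\varphi\in(0,1)$, and $z(0)=0$. $c^*$ denotes the real number such that $(P_c)$ has a solution with $z(1)=0$ iff $c\ge c^*$, this solution then being unique. *)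

theory Defs
  imports "HOL-Analysis.Analysis" "HOL-Library.Liminf_Limsup"
begin

definition solP :: "(real \<Rightarrow> real) \<Rightarrow> (real \<Rightarrow> real) \<Rightarrow> real \<Rightarrow> (real \<Rightarrow> real) \<Rightarrow> bool" where
  "solP h q c z \<longleftrightarrow>
     continuous_on {0..1} z \<and>
     (\<forall>\<phi>\<in>{0<..<1}. z differentiable (at \<phi>)) \<and>
     continuous_on {0<..<1} (deriv z) \<and>
     (\<forall>\<phi>\<in>{0<..<1}. deriv z \<phi> = h \<phi> - c - q \<phi> / z \<phi>) \<and>
     (\<forall>\<phi>\<in>{0<..<1}. z \<phi> < 0) \<and>
     z 0 = 0"

end

theory Submission
  imports Defs
begin


lemma stay_above:
  fixes f :: "real \<Rightarrow> real"
  assumes ab: "a \<le> b" and cont: "continuous_on {a..b} f" and fa: "f a \<ge> c0"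
    and der: "\<forall>t\<in>{a..<b}. f t = c0 \<longrightarrow> (\<exists>l>0. (f has_real_derivative l) (at t))"
  shows "\<forall>t\<in>{a..b}. f t \<ge> c0"
proof (rule ccontr)
  assume "\<not> ?thesis"
  then obtain t1 where t1: "t1 \<in> {a..b}" "f t1 < c0" by force
  have ct1: "continuous_on {a..t1} f" using cont t1 by (auto intro: continuous_on_subset)
  obtain x0 where x0: "a \<le> x0" "x0 \<le> t1" "f x0 = c0"
    using IVT2'[of f t1 c0 a, OF _ fa _ ct1] t1 by auto
  define S where "S = {t\<in>{a..t1}. f t = c0}"
  have "closed S" unfolding S_def by (rule continuous_closed_preimage_constant[OF ct1]) auto
  moreover have "bounded S" unfolding S_def by (rule bounded_subset[of "{a..t1}"]) auto
  ultimately have "compact S" using compact_eq_bounded_closed by blast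
  moreover have "S \<noteq> {}" using x0 S_def by auto
  ultimately obtain ts where ts: "ts \<in> S" "\<forall>y\<in>S. y \<le> ts" using compact_attains_sup by blast
  have tsle: "a \<le> ts" "ts \<le> t1" "f ts = c0" using ts(1) S_def by auto
  have "ts \<noteq> t1" using tsle t1 by auto
  hence tslt: "ts < t1" using tsle by auto
  then obtain l where l: "l > 0" "(f has_real_derivative l) (at ts)" using der tsle t1 by auto
  obtain dd where dd: "dd > 0" "\<forall>h>0. h < dd \<longrightarrow> f ts < f (ts + h)"
    using DERIV_pos_inc_right[OF l(2) l(1)] by blast
  define s where "s = ts + min (dd/2) ((t1 - ts)/2)"
  have m: "0 < min (dd/2) ((t1 - ts)/2)" "min (dd/2) ((t1 - ts)/2) < dd" "min (dd/2) ((t1 - ts)/2) < t1 - ts"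
    using dd tslt by (simp_all add: min_def; linarith)+
  have s: "ts < s" "s < t1" "f ts < f s" using m dd unfolding s_def by auto
  have cs: "continuous_on {s..t1} f" using ct1 s tsle by (auto intro: continuous_on_subset)
  obtain x where x: "s \<le> x" "x \<le> t1" "f x = c0"
    using IVT2'[of f t1 c0 s, OF _ _ _ cs] s t1 tsle by auto
  have "x \<in> S" using x s tsle S_def by auto
  thus False using ts(2) x s by force
qed

lemma stay_below:
  fixes f :: "real \<Rightarrow> real"
  assumes ab: "a \<le> b" and cont: "continuous_on {a..b} f" and fa: "f a \<le> c0"
    and der: "\<forall>t\<in>{a..<b}. f t = c0 \<longrightarrow> (\<exists>l<0. (f has_real_derivative l) (at t))"
  shows "\<forall>t\<in>{a..b}. f t \<le> c0"
proof -
  have "\<forall>t\<in>{a..b}. (\<lambda>x. - f x) t \<ge> - c0"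
  proof (rule stay_above[OF ab])
    show "continuous_on {a..b} (\<lambda>x. - f x)" using cont by (intro continuous_intros)
    show "- f a \<ge> - c0" using fa by simp
    show "\<forall>t\<in>{a..<b}. - f t = - c0 \<longrightarrow> (\<exists>l>0. ((\<lambda>x. - f x) has_real_derivative l) (at t))"
    proof (intro ballI impI)
      fix t assume "t \<in> {a..<b}" "- f t = - c0"
      then obtain l where "l < 0" "(f has_real_derivative l) (at t)" using der by auto
      thus "\<exists>l>0. ((\<lambda>x. - f x) has_real_derivative l) (at t)"
        by (intro exI[of _ "-l"]) (auto intro: derivative_intros)
    qed
  qed
  thus ?thesis by auto
qed

lemma core:
  fixes D D' g h z :: "real \<Rightarrow> real" and c L :: real
  assumes D_deriv: "\<forall>x\<in>{0..1}. (D has_real_derivative D' x) (at x within {0..1})"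
    and D'_cont: "continuous_on {0..1} D'"
    and h_cont: "continuous_on {0..1} h"
    and D_pos: "\<forall>x\<in>{0<..<1}. D x > 0" and D1: "D 1 = 0"
    and g_cont: "continuous_on {0..1} g" and g_pos: "\<forall>x\<in>{0<..1}. g x > 0"
    and z_sol: "solP h (\<lambda>\<phi>. D \<phi> * g \<phi>) c z" and z1: "z 1 = 0"
    and Lle: "L \<le> 0"
    and Pneg: "\<And>v. L < v \<Longrightarrow> v < 0 \<Longrightarrow> g 1 * v^2 - (h 1 - c) * v + D' 1 < 0"
    and Ppos: "\<And>v. v < L \<Longrightarrow> g 1 * v^2 - (h 1 - c) * v + D' 1 > 0"
  shows "((\<lambda>\<phi>. D \<phi> / z \<phi>) \<longlongrightarrow> L) (at_left 1)"
proof -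
  define a where "a = h 1 - c"
  define b where "b = g 1"
  define d where "d = D' 1"
  define w where "w = (\<lambda>\<phi>. D \<phi> / z \<phi>)"
  define Q where "Q = (\<lambda>t v. g t * v^2 - (h t - c) * v + D' t)"
  from z_sol have zc: "continuous_on {0..1} z" and zdif: "\<forall>\<phi>\<in>{0<..<1}. z differentiable (at \<phi>)"
     and zder_eq: "\<forall>\<phi>\<in>{0<..<1}. deriv z \<phi> = h \<phi> - c - D \<phi> * g \<phi> / z \<phi>"
     and zneg: "\<forall>\<phi>\<in>{0<..<1}. z \<phi> < 0"
     unfolding solP_def by auto
  have zD: "(z has_real_derivative (h t - c - g t * w t)) (at t)" if t: "t \<in> {0<..<1}" for t
  proof -
    have "(z has_real_derivative deriv z t) (at t)" using zdif t DERIV_deriv_iff_real_differentiable by blast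
    moreover have "deriv z t = h t - c - g t * w t" using zder_eq t by (simp add: w_def)
    ultimately show ?thesis by simp
  qed
  have DD: "(D has_real_derivative D' t) (at t)" if t: "t \<in> {0<..<1}" for t
  proof -
    have "(D has_real_derivative D' t) (at t within {0..1})" using D_deriv t by auto
    moreover have "at t within {0..1::real} = at t" using t by (intro at_within_Icc_at) auto
    ultimately show ?thesis by simp
  qed
  have Dc: "continuous_on {0..1} D"
    using D_deriv DERIV_continuous continuous_on_eq_continuous_within by blast
  have wD: "(w has_real_derivative Q t (w t) / z t) (at t)" if t: "t \<in> {0<..<1}" for t
  proof -
    have zt: "z t \<noteq> 0" using zneg t by force
    have "(w has_real_derivative (D' t * z t - D t * (h t - c - g t * w t)) / (z t * z t)) (at t)"
      unfolding w_def using DERIV_divide[OF DD[OF t] zD[OF t] zt] by (simp add: w_def)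
    moreover have "(D' t * z t - D t * (h t - c - g t * w t)) / (z t * z t) = Q t (w t) / z t"
      using zt unfolding Q_def w_def by (simp add: field_simps power2_eq_square)
    ultimately show ?thesis by simp
  qed
  have wc: "continuous_on {p..q} w" if "0 < p" "q < 1" for p q
  proof (intro continuous_at_imp_continuous_on ballI)
    fix x assume "x \<in> {p..q}"
    hence "x \<in> {0<..<1}" using that by auto
    thus "isCont w x" using wD DERIV_isCont by blast
  qed
  have lim1: "(f \<longlongrightarrow> f 1) (at_left 1)" if "continuous_on {0..1} f" for f :: "real \<Rightarrow> real"
  proof -
    have "(f \<longlongrightarrow> f 1) (at 1 within {0..1})" using that unfolding continuous_on_def by auto
    moreover have "at 1 within {0..1::real} = at_left 1" by (rule at_within_Icc_at_left) simp
    ultimately show ?thesis by simp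
  qed
  have limQ: "((\<lambda>t. Q t y) \<longlongrightarrow> b*y^2 - a*y + d) (at_left 1)" for y
    unfolding Q_def a_def b_def d_def
    by (intro tendsto_intros lim1 g_cont h_cont D'_cont)
  have limz': "((\<lambda>t. h t - c - g t * y) \<longlongrightarrow> a - b*y) (at_left 1)" for y
    unfolding a_def b_def by (intro tendsto_intros lim1 g_cont h_cont)
  have limD': "(D' \<longlongrightarrow> d) (at_left 1)" unfolding d_def by (intro lim1 D'_cont)
  have b0: "b > 0" using g_pos b_def by auto
  have mvtz: "\<exists>\<xi>. p < \<xi> \<and> \<xi> < 1 \<and> - z p = (1 - p) * (h \<xi> - c - g \<xi> * w \<xi>)" if p: "p \<in> {0<..<1}" for p
  proof -
    have "continuous_on {p..1} z" using zc p by (auto intro: continuous_on_subset)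
    moreover have "z differentiable (at x)" if "p < x" "x < 1" for x using zdif that p by auto
    ultimately obtain l \<xi> where "p < \<xi>" "\<xi> < 1" "DERIV z \<xi> :> l" "z 1 - z p = (1 - p) * l"
      using MVT[of p 1 z] p by auto
    moreover have "l = h \<xi> - c - g \<xi> * w \<xi>"
      using DERIV_unique[OF calculation(3) zD[of \<xi>]] calculation p by auto
    ultimately show ?thesis using z1 by auto
  qed
  have mvtD: "\<exists>\<xi>. p < \<xi> \<and> \<xi> < 1 \<and> - D p = (1 - p) * D' \<xi>" if p: "p \<in> {0<..<1}" for p
  proof -
    have "continuous_on {p..1} D" using Dc p by (auto intro: continuous_on_subset)
    moreover have "D differentiable (at x)" if "p < x" "x < 1" for x
      using DD[of x] that p real_differentiable_def by auto
    ultimately obtain l \<xi> where "p < \<xi>" "\<xi> < 1" "DERIV D \<xi> :> l" "D 1 - D p = (1 - p) * l"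
      using MVT[of p 1 D] p by auto
    moreover have "l = D' \<xi>" using DERIV_unique[OF calculation(3) DD[of \<xi>]] calculation p by auto
    ultimately show ?thesis using D1 by auto
  qed
  have ev01: "eventually (\<lambda>x. x \<in> {0<..<1::real}) (at_left 1)"
    by (rule eventually_at_left_real) simp
  have wneg: "w p < 0" if "p \<in> {0<..<1}" for p
    using D_pos zneg that unfolding w_def by (simp add: divide_pos_neg)
  have upper: "eventually (\<lambda>\<phi>. w \<phi> < y) (at_left 1)" if y: "y > L" for y
  proof (cases "y \<ge> 0")
    case True
    show ?thesis using ev01 
    proof (rule eventually_mono)
      fix x assume "x \<in> {0<..<(1::real)}"
      thus "w x < y" using wneg[of x] True by linarith
    qed
  next
    case False
    hence y0: "y < 0" by simp
    define \<eta> where "\<eta> = -(b*y^2 - a*y + d)"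
    have \<eta>: "\<eta> > 0" using Pneg[OF y y0] unfolding \<eta>_def a_def b_def d_def by simp
    define \<epsilon> where "\<epsilon> = \<eta> / (2*(1 - y))"
    have \<epsilon>: "\<epsilon> > 0" "\<epsilon> * (1 - y) = \<eta>/2" using \<eta> y0 unfolding \<epsilon>_def by (auto simp: field_simps)
    have ev1: "eventually (\<lambda>t. Q t y < 0) (at_left 1)"
      using order_tendstoD(2)[OF limQ[of y], of 0] \<eta> \<eta>_def by simp
    have ev2: "eventually (\<lambda>t. h t - c - g t * y < a - b*y + \<epsilon>) (at_left 1)"
      using order_tendstoD(2)[OF limz'[of y], of "a - b*y + \<epsilon>"] \<epsilon> by simp
    have ev3: "eventually (\<lambda>t. D' t < d + \<epsilon>) (at_left 1)"
      using order_tendstoD(2)[OF limD', of "d + \<epsilon>"] \<epsilon> by simp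
    have "eventually (\<lambda>t. t \<in> {0<..<1} \<and> Q t y < 0 \<and> h t - c - g t * y < a - b*y + \<epsilon> \<and> D' t < d + \<epsilon>) (at_left 1)"
      using ev01 ev1 ev2 ev3 by eventually_elim auto
    then obtain b1 where b1: "b1 < 1" "\<And>t. b1 < t \<Longrightarrow> t < 1 \<Longrightarrow>
        t \<in> {0<..<1} \<and> Q t y < 0 \<and> h t - c - g t * y < a - b*y + \<epsilon> \<and> D' t < d + \<epsilon>"
      unfolding eventually_at_left_field by auto
    have "w p < y" if p: "b1 < p" "p < 1" for p
    proof (rule ccontr)
      assume "\<not> w p < y"
      hence wp: "w p \<ge> y" by simp
      have p01: "p \<in> {0<..<1}" using b1 p by auto
      have stay: "w t \<ge> y" if t: "p \<le> t" "t < 1" for t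
      proof -
        have "\<forall>s\<in>{p..t}. w s \<ge> y"
        proof (rule stay_above)
          show "p \<le> t" using t by simp
          show "continuous_on {p..t} w" using wc p01 t by auto
          show "w p \<ge> y" by fact
          show "\<forall>s\<in>{p..<t}. w s = y \<longrightarrow> (\<exists>l>0. (w has_real_derivative l) (at s))"
          proof (intro ballI impI)
            fix s assume s: "s \<in> {p..<t}" "w s = y"
            have s1: "b1 < s" "s < 1" using s t p by auto
            have "Q s y < 0" "s \<in> {0<..<1}" using b1(2)[OF s1] by auto
            moreover have "z s < 0" using zneg calculation by auto
            ultimately show "\<exists>l>0. (w has_real_derivative l) (at s)"
              using wD[of s] s(2) by (intro exI[of _ "Q s y / z s"]) (auto simp: divide_neg_neg)
          qed
        qed
        thus ?thesis using t by auto
      qed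
      obtain \<xi> where xi: "p < \<xi>" "\<xi> < 1" "- z p = (1 - p) * (h \<xi> - c - g \<xi> * w \<xi>)"
        using mvtz[OF p01] by auto
      have gxi: "g \<xi> > 0" using g_pos xi p01 by auto
      have "g \<xi> * y \<le> g \<xi> * w \<xi>" using stay[of \<xi>] xi gxi by (intro mult_left_mono) auto
      hence "h \<xi> - c - g \<xi> * w \<xi> \<le> a - b*y + \<epsilon>" using b1(2)[of \<xi>] xi p by auto
      hence zb: "- z p \<le> (1 - p) * (a - b*y + \<epsilon>)" using xi p by (simp add: mult_left_mono)
      obtain \<xi>' where xi': "p < \<xi>'" "\<xi>' < 1" "- D p = (1 - p) * D' \<xi>'"
        using mvtD[OF p01] by auto
      have "D' \<xi>' < d + \<epsilon>" using b1(2)[of \<xi>'] xi' p by auto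
      hence "(1 - p) * D' \<xi>' \<le> (1 - p) * (d + \<epsilon>)" using p by (intro mult_left_mono) auto
      hence Db: "(1 - p) * (- d - \<epsilon>) \<le> D p" using xi'(3) by (simp add: algebra_simps)
      have zp: "z p < 0" using zneg p01 by auto
      have "D p \<le> y * z p" using wp zp unfolding w_def by (simp add: le_divide_eq)
      also have "\<dots> = (-y) * (- z p)" by simp
      also have "\<dots> \<le> (-y) * ((1 - p) * (a - b*y + \<epsilon>))" using zb y0 by (intro mult_left_mono) auto
      finally have "(1 - p) * (- d - \<epsilon>) \<le> (1 - p) * ((-y) * (a - b*y + \<epsilon>))" using Db by (simp add: algebra_simps)
      hence "- d - \<epsilon> \<le> (-y) * (a - b*y + \<epsilon>)" by (rule mult_left_le_imp_le) (use p in auto)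
      hence "0 \<le> b*y^2 - a*y + d + \<epsilon> * (1 - y)" by (simp add: algebra_simps power2_eq_square)
      thus False using \<epsilon> \<eta> \<eta>_def by linarith
    qed
    thus ?thesis unfolding eventually_at_left_field using b1 by auto
  qed
  have lower: "eventually (\<lambda>\<phi>. y < w \<phi>) (at_left 1)" if y: "y < L" for y
  proof -
    have y0: "y < 0" using y Lle by simp
    define \<eta> where "\<eta> = b*y^2 - a*y + d"
    have \<eta>: "\<eta> > 0" using Ppos[OF y] unfolding \<eta>_def a_def b_def d_def by simp
    define \<epsilon> where "\<epsilon> = \<eta> / (2*(1 - y))"
    have \<epsilon>: "\<epsilon> > 0" "\<epsilon> * (1 - y) = \<eta>/2" using \<eta> y0 unfolding \<epsilon>_def by (auto simp: field_simps)
    have ev1: "eventually (\<lambda>t. Q t y > 0) (at_left 1)"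
      using order_tendstoD(1)[OF limQ[of y], of 0] \<eta> \<eta>_def by simp
    have ev2: "eventually (\<lambda>t. h t - c - g t * y > a - b*y - \<epsilon>) (at_left 1)"
      using order_tendstoD(1)[OF limz'[of y], of "a - b*y - \<epsilon>"] \<epsilon> by simp
    have ev3: "eventually (\<lambda>t. D' t > d - \<epsilon>) (at_left 1)"
      using order_tendstoD(1)[OF limD', of "d - \<epsilon>"] \<epsilon> by simp
    have "eventually (\<lambda>t. t \<in> {0<..<1} \<and> Q t y > 0 \<and> h t - c - g t * y > a - b*y - \<epsilon> \<and> D' t > d - \<epsilon>) (at_left 1)"
      using ev01 ev1 ev2 ev3 by eventually_elim auto
    then obtain b1 where b1: "b1 < 1" "\<And>t. b1 < t \<Longrightarrow> t < 1 \<Longrightarrow>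
        t \<in> {0<..<1} \<and> Q t y > 0 \<and> h t - c - g t * y > a - b*y - \<epsilon> \<and> D' t > d - \<epsilon>"
      unfolding eventually_at_left_field by auto
    have "y < w p" if p: "b1 < p" "p < 1" for p
    proof (rule ccontr)
      assume "\<not> y < w p"
      hence wp: "w p \<le> y" by simp
      have p01: "p \<in> {0<..<1}" using b1 p by auto
      have stay: "w t \<le> y" if t: "p \<le> t" "t < 1" for t
      proof -
        have "\<forall>s\<in>{p..t}. w s \<le> y"
        proof (rule stay_below)
          show "p \<le> t" using t by simp
          show "continuous_on {p..t} w" using wc p01 t by auto
          show "w p \<le> y" by fact
          show "\<forall>s\<in>{p..<t}. w s = y \<longrightarrow> (\<exists>l<0. (w has_real_derivative l) (at s))"
          proof (intro ballI impI)
            fix s assume s: "s \<in> {p..<t}" "w s = y"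
            have s1: "b1 < s" "s < 1" using s t p by auto
            have "Q s y > 0" "s \<in> {0<..<1}" using b1(2)[OF s1] by auto
            moreover have "z s < 0" using zneg calculation by auto
            ultimately show "\<exists>l<0. (w has_real_derivative l) (at s)"
              using wD[of s] s(2) by (intro exI[of _ "Q s y / z s"]) (auto simp: divide_pos_neg)
          qed
        qed
        thus ?thesis using t by auto
      qed
      obtain \<xi> where xi: "p < \<xi>" "\<xi> < 1" "- z p = (1 - p) * (h \<xi> - c - g \<xi> * w \<xi>)"
        using mvtz[OF p01] by auto
      have gxi: "g \<xi> > 0" using g_pos xi p01 by auto
      have "g \<xi> * w \<xi> \<le> g \<xi> * y" using stay[of \<xi>] xi gxi by (intro mult_left_mono) auto
      hence "h \<xi> - c - g \<xi> * w \<xi> \<ge> a - b*y - \<epsilon>" using b1(2)[of \<xi>] xi p by auto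
      hence zb: "- z p \<ge> (1 - p) * (a - b*y - \<epsilon>)" using xi p by (simp add: mult_left_mono)
      obtain \<xi>' where xi': "p < \<xi>'" "\<xi>' < 1" "- D p = (1 - p) * D' \<xi>'"
        using mvtD[OF p01] by auto
      have "D' \<xi>' > d - \<epsilon>" using b1(2)[of \<xi>'] xi' p by auto
      hence "(1 - p) * (d - \<epsilon>) \<le> (1 - p) * D' \<xi>'" using p by (intro mult_left_mono) auto
      hence Db: "D p \<le> (1 - p) * (- d + \<epsilon>)" using xi'(3) by (simp add: algebra_simps)
      have zp: "z p < 0" using zneg p01 by auto
      have "(-y) * ((1 - p) * (a - b*y - \<epsilon>)) \<le> (-y) * (- z p)" using zb y0 by (intro mult_left_mono) auto
      also have "\<dots> = y * z p" by simp
      also have "\<dots> \<le> D p" using wp zp unfolding w_def by (simp add: divide_le_eq)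
      finally have "(1 - p) * ((-y) * (a - b*y - \<epsilon>)) \<le> (1 - p) * (- d + \<epsilon>)" using Db by (simp add: algebra_simps)
      hence "(-y) * (a - b*y - \<epsilon>) \<le> - d + \<epsilon>" by (rule mult_left_le_imp_le) (use p in auto)
      hence "b*y^2 - a*y + d - \<epsilon> * (1 - y) \<le> 0" by (simp add: algebra_simps power2_eq_square)
      thus False using \<epsilon> \<eta> \<eta>_def by linarith
    qed
    thus ?thesis unfolding eventually_at_left_field using b1 by auto
  qed
  show ?thesis using order_tendstoI[OF lower upper] unfolding w_def by simp
qed


lemma root_neg:
  fixes a b d v :: real assumes b: "b > 0" and d: "d \<le> 0"
  shows "(a - sqrt (a^2 - 4*d*b)) / (2*b) \<le> 0"
    and "(a - sqrt (a^2 - 4*d*b)) / (2*b) < v \<Longrightarrow> v < 0 \<Longrightarrow> (b * v^2 - a * v + d < 0 \<or> d = 0)"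
    and "v < (a - sqrt (a^2 - 4*d*b)) / (2*b) \<Longrightarrow> (b * v^2 - a * v + d > 0)"
proof -
  define s where "s = sqrt (a^2 - 4*d*b)"
  have db: "d*b \<le> 0" using b d mult_nonpos_nonneg[of d b] by simp
  have db4: "4*d*b \<le> 0" using db by (simp add: mult.commute)
  have nn: "a^2 - 4*d*b \<ge> 0" using db4 zero_le_power2[of a] by linarith
  have s2: "s^2 = a^2 - 4*d*b" using nn unfolding s_def by (rule real_sqrt_pow2)
  have s0: "s \<ge> 0" using nn unfolding s_def by simp
  have "sqrt (a^2) \<le> s" unfolding s_def using db4 by (intro real_sqrt_le_mono) linarith
  hence sa: "\<bar>a\<bar> \<le> s" by simp
  define L where "L = (a - s) / (2*b)"
  define R where "R = (a + s) / (2*b)"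
  have R0: "R \<ge> 0" unfolding R_def using sa b by (simp add: divide_nonneg_pos)
  have L0: "L \<le> 0" unfolding L_def using sa b by (simp add: divide_nonpos_pos)
  have fac: "b * v^2 - a * v + d = b * (v - L) * (v - R)" for v
  proof -
    have "b * (v - L) * (v - R) = b * v^2 - a * v + (a^2 - s^2)/(4*b)"
      unfolding L_def R_def using b by (simp add: field_simps power2_eq_square)
    also have "(a^2 - s^2)/(4*b) = d" using s2 b by simp
    finally show ?thesis by simp
  qed
  show "(a - sqrt (a^2 - 4*d*b)) / (2*b) \<le> 0" using L0 L_def s_def by simp
  show "(a - sqrt (a^2 - 4*d*b)) / (2*b) < v \<Longrightarrow> v < 0 \<Longrightarrow> (b * v^2 - a * v + d < 0 \<or> d = 0)"
  proof -
    assume "(a - sqrt (a^2 - 4*d*b)) / (2*b) < v" "v < 0"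
    hence "L < v" "v < R \<or> R = 0" using R0 L_def s_def by auto
    show ?thesis
    proof (cases "v < R")
      case True
      hence "b * (v - L) * (v - R) < 0" using \<open>L < v\<close> b by (simp add: mult_pos_neg)
      thus ?thesis using fac by simp
    next
      case False
      hence "R \<le> v" by simp
      hence "a + s \<le> 0" using R0 \<open>v < 0\<close> by linarith
      hence "s = \<bar>a\<bar>" using sa by linarith
      hence "s^2 = a^2" by simp
      hence "d*b = 0" using s2 by simp
      thus ?thesis using b by simp
    qed
  qed
  show "v < (a - sqrt (a^2 - 4*d*b)) / (2*b) \<Longrightarrow> (b * v^2 - a * v + d > 0)"
  proof -
    assume "v < (a - sqrt (a^2 - 4*d*b)) / (2*b)"
    hence "v < L" "v < R" using L_def s_def R0 L0 by auto
    hence "(v - L) * (v - R) > 0" by (simp add: mult_neg_neg)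
    hence "b * ((v - L) * (v - R)) > 0" using b by simp
    hence "b * (v - L) * (v - R) > 0" by (simp add: mult.assoc)
    thus ?thesis using fac by simp
  qed
qed
theorem lemma9p1:
  fixes f h D D' g :: "real \<Rightarrow> real" and c cstar :: real and z :: "real \<Rightarrow> real"
  assumes f_deriv: "\<forall>x\<in>{0..1}. (f has_real_derivative h x) (at x within {0..1})"
      and h_cont: "continuous_on {0..1} h"
      and f0: "f 0 = 0"
      and D_deriv: "\<forall>x\<in>{0..1}. (D has_real_derivative D' x) (at x within {0..1})"
      and D'_cont: "continuous_on {0..1} D'"
      and D_pos: "\<forall>x\<in>{0<..<1}. D x > 0"
      and D1: "D 1 = 0"
      and g_cont: "continuous_on {0..1} g"
      and g_pos: "\<forall>x\<in>{0<..1}. g x > 0"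
      and g0: "g 0 = 0"
      and limsup: "Limsup (at_right 0) (\<lambda>\<phi>. ereal (D \<phi> * g \<phi> / \<phi>)) < \<infinity>"
      and cstar: "\<forall>c'. (\<exists>w. solP h (\<lambda>\<phi>. D \<phi> * g \<phi>) c' w \<and> w 1 = 0) \<longleftrightarrow> c' \<ge> cstar"
      and c_ge: "c \<ge> cstar"
      and z_sol: "solP h (\<lambda>\<phi>. D \<phi> * g \<phi>) c z"
      and z1: "z 1 = 0"
  shows "(D' 1 < 0 \<longrightarrow>
            ((\<lambda>\<phi>. D \<phi> / z \<phi>) \<longlongrightarrow>
               (h 1 - c - sqrt ((h 1 - c)\<^sup>2 - 4 * D' 1 * g 1)) / (2 * g 1)) (at_left 1))
       \<and> (D' 1 = 0 \<longrightarrow>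
            ((\<lambda>\<phi>. D \<phi> / z \<phi>) \<longlongrightarrow> min 0 ((h 1 - c) / g 1)) (at_left 1))"
proof -
  have gb: "g 1 > 0" using g_pos by auto
  note C = core[OF D_deriv D'_cont h_cont D_pos D1 g_cont g_pos z_sol z1]
  show ?thesis
  proof (intro conjI impI)
    assume dn: "D' 1 < 0"
    note R = root_neg[OF gb, where d="D' 1" and a="h 1 - c"]
    show "((\<lambda>\<phi>. D \<phi> / z \<phi>) \<longlongrightarrow>
               (h 1 - c - sqrt ((h 1 - c)\<^sup>2 - 4 * D' 1 * g 1)) / (2 * g 1)) (at_left 1)"
    proof (rule C)
      show "(h 1 - c - sqrt ((h 1 - c)\<^sup>2 - 4 * D' 1 * g 1)) / (2 * g 1) \<le> 0" using R(1) dn by simp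
      show "g 1 * v^2 - (h 1 - c) * v + D' 1 < 0"
        if "(h 1 - c - sqrt ((h 1 - c)\<^sup>2 - 4 * D' 1 * g 1)) / (2 * g 1) < v" "v < 0" for v
        using R(2)[of v] that dn by auto
      show "g 1 * v^2 - (h 1 - c) * v + D' 1 > 0"
        if "v < (h 1 - c - sqrt ((h 1 - c)\<^sup>2 - 4 * D' 1 * g 1)) / (2 * g 1)" for v
        using R(3)[of v] that dn by auto
    qed
  next
    assume d0: "D' 1 = 0"
    show "((\<lambda>\<phi>. D \<phi> / z \<phi>) \<longlongrightarrow> min 0 ((h 1 - c) / g 1)) (at_left 1)"
    proof (rule C)
      show "min 0 ((h 1 - c) / g 1) \<le> 0" by simp
      show "g 1 * v^2 - (h 1 - c) * v + D' 1 < 0" if v: "min 0 ((h 1 - c) / g 1) < v" "v < 0" for v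
      proof -
        have "(h 1 - c) / g 1 < v" using v by (auto simp: min_def split: if_splits)
        hence "h 1 - c < g 1 * v" using gb by (simp add: divide_less_eq mult.commute)
        hence "v * (g 1 * v - (h 1 - c)) < 0" using v(2) by (simp add: mult_neg_pos)
        thus ?thesis using d0 by (simp add: algebra_simps power2_eq_square)
      qed
      show "g 1 * v^2 - (h 1 - c) * v + D' 1 > 0" if v: "v < min 0 ((h 1 - c) / g 1)" for v
      proof -
        have "v < (h 1 - c) / g 1" "v < 0" using v by auto
        hence "g 1 * v < h 1 - c" using gb by (simp add: less_divide_eq mult.commute)
        hence "v * (g 1 * v - (h 1 - c)) > 0" using \<open>v < 0\<close> by (simp add: mult_neg_neg)
        thus ?thesis using d0 by (simp add: algebra_simps power2_eq_square)
      qed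
    qed
  qed
qed

end
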